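(* Assume $r>\mu$, $C-rK_O>0$, $C+rK_I>0$ and $K_I+K_O\ge0$. Then the equation \[ A(\lambda_2-\lambda_1)p^{\lambda_1}+\frac{e^{(\mu-r)\delta}}{r-\mu}(\lambda_2-1)p-\lambda_2e^{-r\delta}\left(\frac{C}{r}+K_I\right)=0 \] has exactly two solutions $p_1,p_2$ in $(0,+\infty)$, and they satisfy $p_1\le p_O$ and $p_2>p_O$. Furthermore, $\lambda_1Ap_2^{\lambda_1-1}+\frac{e^{(\mu-r)\delta}}{r-\mu}>0$.
   Context: Constants: $\mu\in\mathbb{R}$, $\sigma>0$, $r>0$, $C,K_I,K_O\in\mathbb{R}$, $\delta\ge0$. $\lambda_1<\lambda_2$ are the roots of $r-\mu\lambda-\frac12\sigma^2\lambda(\lambda-1)=0$ (so $\lambda_1<0$, $\lambda_2>1$ when $r>\mu$). $p_O:=e^{-\mu\delta}\frac{\lambda_1}{\lambda_1-1}(r-\mu)\left(\frac{C}{r}-K_O\right)$ and $A:=e^{(\mu-r)\delta}p_O^{1-\lambda_1}/(\lambda_1(\mu-r))$. *)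

theory Defs
  imports "HOL-Analysis.Analysis"
begin

definition p_O :: "real \<Rightarrow> real \<Rightarrow> real \<Rightarrow> real \<Rightarrow> real \<Rightarrow> real \<Rightarrow> real" where
  "p_O \<mu> r C K_O \<delta> lam1 =
     exp (- \<mu> * \<delta>) * (lam1 / (lam1 - 1)) * (r - \<mu>) * (C / r - K_O)"

definition A_coef :: "real \<Rightarrow> real \<Rightarrow> real \<Rightarrow> real \<Rightarrow> real \<Rightarrow> real \<Rightarrow> real" where
  "A_coef \<mu> r C K_O \<delta> lam1 =
     exp ((\<mu> - r) * \<delta>) * (p_O \<mu> r C K_O \<delta> lam1) powr (1 - lam1) / (lam1 * (\<mu> - r))"

end

theory Submission
  imports Defs
begin

lemma two_roots:
  fixes c d b l q :: real
  assumes c: "c > 0" and d: "d > 0" and b: "b > 0" and l: "l < 0" and q: "q > 0"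
    and Gq: "c * q powr l + d * q - b \<le> 0"
    and Dq: "c * l * q powr (l - 1) + d < 0"
  shows "\<exists>p1 p2. 0 < p1 \<and> p1 < p2 \<and> {p. 0 < p \<and> c * p powr l + d * p - b = 0} = {p1, p2}
           \<and> p1 \<le> q \<and> p2 > q"
proof -
  define G where "G = (\<lambda>p::real. c * p powr l + d * p - b)"
  define G' where "G' = (\<lambda>p::real. c * l * p powr (l - 1) + d)"
  have der: "DERIV G x :> G' x" if "x > 0" for x
    unfolding G_def G'_def using that
    by (auto intro!: derivative_eq_intros has_real_derivative_powr[THEN DERIV_cmult, of x c l, simplified])
  have cont: "continuous_on {x..y} G" if "x > 0" for x y
    using that by (auto intro!: continuous_at_imp_continuous_on DERIV_isCont[OF der])
  define k where "k = - d / (c * l)"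
  have k: "k > 0" unfolding k_def using c d l by (simp add: divide_pos_neg mult_pos_neg)
  define s where "s = k powr (1 / (l - 1))"
  have s: "s > 0" unfolding s_def using k by simp
  have sk: "s powr (l - 1) = k" unfolding s_def using k l by (simp add: powr_powr)
  have G'_iff: "G' x < 0 \<longleftrightarrow> x powr (l - 1) > k" if "x > 0" for x
  proof -
    have "c * l < 0" using c l by (simp add: mult_pos_neg)
    then have "k < x powr (l - 1) \<longleftrightarrow> x powr (l - 1) * (c * l) < - d"
      unfolding k_def by (rule neg_divide_less_eq)
    moreover have "G' x = x powr (l - 1) * (c * l) + d" unfolding G'_def by simp
    ultimately show ?thesis by linarith
  qed
  have G'_iff2: "G' x > 0 \<longleftrightarrow> x powr (l - 1) < k" if "x > 0" for x
  proof -
    have "c * l < 0" using c l by (simp add: mult_pos_neg)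
    then have "x powr (l - 1) < k \<longleftrightarrow> - d < x powr (l - 1) * (c * l)"
      unfolding k_def by (rule neg_less_divide_eq)
    moreover have "G' x = x powr (l - 1) * (c * l) + d" unfolding G'_def by simp
    ultimately show ?thesis by linarith
  qed
  have neg: "G' x < 0" if "0 < x" "x < s" for x
    using G'_iff[OF that(1)] powr_less_mono2_neg[of "l - 1" x s] that l sk by simp
  have pos: "G' x > 0" if "s < x" for x
    using G'_iff2[of x] powr_less_mono2_neg[of "l - 1" s x] that l sk s by simp
  have qs: "q < s"
  proof (rule ccontr)
    assume "\<not> q < s"
    then have "q powr (l - 1) \<le> s powr (l - 1)"
      using powr_mono2'[of "l - 1" s q] s l by simp
    then show False using G'_iff[OF q] Dq sk unfolding G'_def by simp
  qed
  have dec: "G y < G x" if "0 < x" "x < y" "y \<le> s" for x y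
  proof -
    have "\<And>t. x \<le> t \<Longrightarrow> t \<le> y \<Longrightarrow> DERIV G t :> G' t" using der that by simp
    from MVT2[OF that(2) this] obtain z where z: "x < z" "z < y" "G y - G x = (y - x) * G' z"
      by blast
    have "G' z < 0" using neg z that by simp
    then have "(y - x) * G' z < 0" using z by (simp add: mult_pos_neg)
    then show ?thesis using z by linarith
  qed
  have inc: "G x < G y" if "s \<le> x" "x < y" for x y
  proof -
    have "\<And>t. x \<le> t \<Longrightarrow> t \<le> y \<Longrightarrow> DERIV G t :> G' t" using der that s by simp
    from MVT2[OF that(2) this] obtain z where z: "x < z" "z < y" "G y - G x = (y - x) * G' z"
      by blast
    have "G' z > 0" using pos z that by simp
    then have "(y - x) * G' z > 0" using z by simp
    then show ?thesis using z by linarith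
  qed
  have Gs: "G s < 0" using dec[OF q qs] Gq unfolding G_def by simp
  define M where "M = b / c + 1"
  have "b / c > 0" using b c by simp
  then have M: "M > 0" unfolding M_def by simp
  define q1 where "q1 = min (q / 2) (M powr (1 / l))"
  have q1: "q1 > 0" "q1 \<le> q" unfolding q1_def using q M by auto
  have "q1 powr l \<ge> (M powr (1 / l)) powr l"
    using powr_mono2'[of l q1 "M powr (1 / l)"] l q1 unfolding q1_def by simp
  also have "(M powr (1 / l)) powr l = M" using M l by (simp add: powr_powr)
  finally have "q1 powr l \<ge> M" .
  then have "c * q1 powr l \<ge> c * M" using c by simp
  moreover have "c * M = b + c" unfolding M_def using c by (simp add: field_simps)
  moreover have "d * q1 > 0" using d q1 by simp
  ultimately have Gq1: "G q1 > 0" unfolding G_def using c by linarith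
  have Gq': "G q \<le> 0" unfolding G_def using Gq .
  obtain p1 where p1: "q1 \<le> p1" "p1 \<le> q" "G p1 = 0"
    using IVT2'[where f=G and a=q1 and b=q and y=0, OF Gq' _ q1(2) cont[OF q1(1)]] Gq1 by auto
  define q2 where "q2 = max s (b / d) + 1"
  have q2: "q2 > s" unfolding q2_def by simp
  have "q2 \<ge> b / d + 1" unfolding q2_def by simp
  then have "d * q2 \<ge> d * (b / d + 1)" using d by (intro mult_left_mono) auto
  moreover have "d * (b / d + 1) = b + d" using d by (simp add: field_simps)
  ultimately have "d * q2 > b" using d by linarith
  moreover have "c * q2 powr l > 0" using c q2 s by simp
  ultimately have Gq2: "G q2 > 0" unfolding G_def by simp
  obtain p2 where p2: "s \<le> p2" "p2 \<le> q2" "G p2 = 0"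
    using IVT'[where f=G and a=s and b=q2 and y=0, OF _ _ _ cont[OF s]] Gs Gq2 q2 by auto
  have p2s: "p2 > s" using p2 Gs by (cases "p2 = s") auto
  have p1pos: "p1 > 0" using p1 q1 by simp
  have set: "{p. 0 < p \<and> G p = 0} = {p1, p2}"
  proof
    show "{p1, p2} \<subseteq> {p. 0 < p \<and> G p = 0}" using p1 p2 p1pos p2s s by auto
  next
    show "{p. 0 < p \<and> G p = 0} \<subseteq> {p1, p2}"
    proof
      fix p assume "p \<in> {p. 0 < p \<and> G p = 0}"
      then have pp: "p > 0" "G p = 0" by auto
      show "p \<in> {p1, p2}"
      proof (cases "p \<le> s")
        case True
        have "p = p1"
        proof (rule ccontr)
          assume "p \<noteq> p1"
          then consider "p < p1" | "p1 < p" by linarith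
          then show False
          proof cases
            case 1 then show False using dec[of p p1] True pp p1 p1pos qs by simp
          next
            case 2 then show False using dec[of p1 p] True pp p1 p1pos qs by simp
          qed
        qed
        then show ?thesis by simp
      next
        case False
        have "p = p2"
        proof (rule ccontr)
          assume "p \<noteq> p2"
          then consider "p < p2" | "p2 < p" by linarith
          then show False
          proof cases
            case 1 then show False using inc[of p p2] False pp p2 by simp
          next
            case 2 then show False using inc[of p2 p] False pp p2 by simp
          qed
        qed
        then show ?thesis by simp
      qed
    qed
  qed
  have set2: "{p. 0 < p \<and> c * p powr l + d * p - b = 0} = {p1, p2}"
    using set unfolding G_def .
  have "p1 < p2" using p1 p2s qs by linarith
  moreover have "q < p2" using p2s qs by linarith
  ultimately show ?thesis
    apply (rule_tac exI[of _ p1], rule_tac exI[of _ p2])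
    using set2 p1pos p1 by blast
qed

theorem lemma5p7:
  fixes \<mu> \<sigma> r C K_I K_O \<delta> lam1 lam2 :: real
  assumes "\<sigma> > 0" and "r > 0" and "\<delta> \<ge> 0"
    and "r - \<mu> * lam1 - 1/2 * \<sigma>^2 * lam1 * (lam1 - 1) = 0"
    and "r - \<mu> * lam2 - 1/2 * \<sigma>^2 * lam2 * (lam2 - 1) = 0"
    and "lam1 < lam2"
    and "r > \<mu>" and "C - r * K_O > 0" and "C + r * K_I > 0" and "K_I + K_O \<ge> 0"
  defines "A \<equiv> A_coef \<mu> r C K_O \<delta> lam1"
    and "pO \<equiv> p_O \<mu> r C K_O \<delta> lam1"
    and "F \<equiv> (\<lambda>p. A_coef \<mu> r C K_O \<delta> lam1 * (lam2 - lam1) * p powr lam1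
                 + exp ((\<mu> - r) * \<delta>) / (r - \<mu>) * (lam2 - 1) * p
                 - lam2 * exp (- r * \<delta>) * (C / r + K_I))"
  shows "\<exists>p1 p2. 0 < p1 \<and> p1 < p2 \<and> {p. 0 < p \<and> F p = 0} = {p1, p2}
           \<and> p1 \<le> pO \<and> p2 > pO
           \<and> lam1 * A * p2 powr (lam1 - 1) + exp ((\<mu> - r) * \<delta>) / (r - \<mu>) > 0"
proof -
  define s2 where "s2 = \<sigma>^2 / 2"
  have s2: "s2 > 0" unfolding s2_def using assms(1) by simp
  have e1: "r - \<mu> * lam1 - s2 * lam1 * (lam1 - 1) = 0" using assms(4) unfolding s2_def by simp
  have e2: "r - \<mu> * lam2 - s2 * lam2 * (lam2 - 1) = 0" using assms(5) unfolding s2_def by simp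
  have "(lam1 - lam2) * (\<mu> + s2 * (lam1 + lam2 - 1)) = 0"
    using e1 e2 by (simp add: algebra_simps)
  then have mu: "\<mu> = - s2 * (lam1 + lam2 - 1)" using assms(6) by simp
  have rr: "r = - s2 * lam1 * lam2" using e1 unfolding mu by (simp add: algebra_simps)
  have rm: "r - \<mu> = - s2 * ((1 - lam1) * (1 - lam2))" using rr mu by (simp add: algebra_simps)
  have "s2 * (lam1 * lam2) < 0" using rr assms(2) by simp
  then have "lam1 * lam2 < 0" using s2 by (simp add: mult_less_0_iff)
  then have l1: "lam1 < 0" and l2pos: "lam2 > 0" using assms(6) by (auto simp: mult_less_0_iff)
  have "s2 * ((1 - lam1) * (1 - lam2)) < 0" using rm assms(7) by simp
  then have "(1 - lam1) * (1 - lam2) < 0" using s2 by (simp add: mult_less_0_iff)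
  then have l2: "lam2 > 1" using l1 by (auto simp: mult_less_0_iff)
  define E1 where "E1 = exp ((\<mu> - r) * \<delta>)"
  define E2 where "E2 = exp (- \<mu> * \<delta>)"
  define E3 where "E3 = exp (- r * \<delta>)"
  have E3: "E3 = E1 * E2" unfolding E1_def E2_def E3_def by (simp add: exp_add[symmetric] algebra_simps)
  have E1p: "E1 > 0" and E2p: "E2 > 0" and E3p: "E3 > 0" unfolding E1_def E2_def E3_def by auto
  define X where "X = C / r - K_O"
  have X: "X > 0" unfolding X_def using assms(2,8) by (simp add: field_simps)
  have rmu: "r - \<mu> > 0" using assms(7) by simp
  have l1f: "lam1 / (lam1 - 1) > 0" using l1 by (simp add: divide_neg_neg)
  have pOe: "pO = E2 * (lam1 / (lam1 - 1)) * (r - \<mu>) * X"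
    unfolding pO_def p_O_def E2_def X_def by simp
  have pO: "pO > 0" unfolding pOe using E2p l1f rmu X by (intro mult_pos_pos) auto
  have Ae: "A = E1 * pO powr (1 - lam1) / (lam1 * (\<mu> - r))"
    unfolding A_def A_coef_def E1_def pO_def by simp
  have "lam1 * (\<mu> - r) > 0" using l1 rmu by (simp add: mult_neg_neg)
  then have Apos: "A > 0" unfolding Ae using E1p pO by simp
  define a where "a = E1 / (r - \<mu>)"
  have apos: "a > 0" unfolding a_def using E1p rmu by simp
  have key: "lam1 * A * pO powr (lam1 - 1) = - a"
  proof -
    have "pO powr (1 - lam1) * pO powr (lam1 - 1) = 1" using pO by (simp add: powr_add[symmetric])
    then show ?thesis unfolding Ae a_def using l1 rmu
      by (simp add: field_simps)
  qed
  have key2: "A * pO powr lam1 = - a * pO / lam1"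
  proof -
    have "pO powr lam1 = pO powr ((lam1 - 1) + 1)" by simp
    also have "\<dots> = pO powr (lam1 - 1) * pO powr 1" by (rule powr_add)
    also have "\<dots> = pO powr (lam1 - 1) * pO" using pO by simp
    finally have eq: "pO powr lam1 = pO powr (lam1 - 1) * pO" .
    have "lam1 * (A * pO powr lam1) = (lam1 * A * pO powr (lam1 - 1)) * pO"
      unfolding eq by (simp add: algebra_simps)
    also have "\<dots> = - a * pO" unfolding key by simp
    finally have "lam1 * (A * pO powr lam1) = - a * pO" .
    then show ?thesis using l1 by (simp add: field_simps)
  qed
  have key3: "a * pO * (lam1 - 1) / lam1 = E3 * X"
  proof -
    have h: "lam1 \<noteq> 0" "lam1 - 1 \<noteq> 0" "r - \<mu> \<noteq> 0" using l1 rmu by auto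
    define lq where "lq = lam1 / (lam1 - 1)"
    have s0: "a * pO = (E1 * E2 * X) * lq" using h(3) unfolding a_def pOe lq_def[symmetric]
      by (simp add: field_simps)
    have "a * pO * (lam1 - 1) / lam1 = (E1 * E2 * X) * (lq * (lam1 - 1) / lam1)"
      unfolding s0 by (simp add: mult.assoc)
    also have "lq * (lam1 - 1) / lam1 = 1" unfolding lq_def using h by simp
    finally show ?thesis unfolding E3 by simp
  qed
  define c where "c = A * (lam2 - lam1)"
  define d where "d = a * (lam2 - 1)"
  define b where "b = lam2 * E3 * (C / r + K_I)"
  have c: "c > 0" unfolding c_def using Apos assms(6) by simp
  have d: "d > 0" unfolding d_def using apos l2 by simp
  have CK: "C / r + K_I > 0" using assms(2,9) by (simp add: field_simps)
  have b: "b > 0" unfolding b_def using l2 E3p CK by simp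
  have Feq: "F = (\<lambda>p. c * p powr lam1 + d * p - b)"
    unfolding F_def c_def d_def b_def a_def E1_def E3_def A_def by (simp add: algebra_simps)
  have Gq: "c * pO powr lam1 + d * pO - b \<le> 0"
  proof -
    have "c * pO powr lam1 + d * pO - b = lam2 * (a * pO * (lam1 - 1) / lam1) - b"
    proof -
      have "c * pO powr lam1 = (lam2 - lam1) * (A * pO powr lam1)" unfolding c_def by (simp add: ac_simps)
      also have "\<dots> = (lam2 - lam1) * (- a * pO / lam1)" unfolding key2 ..
      finally have cc: "c * pO powr lam1 = (lam2 - lam1) * (- a * pO / lam1)" .
      have "lam1 \<noteq> 0" using l1 by simp
      then show ?thesis unfolding cc d_def by (simp add: field_simps)
    qed
    also have "\<dots> = - lam2 * E3 * (K_I + K_O)" unfolding key3 b_def X_def by (simp add: algebra_simps)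
    finally show ?thesis using l2 E3p assms(10) by (simp add: mult_nonneg_nonneg)
  qed
  have Dq: "c * lam1 * pO powr (lam1 - 1) + d < 0"
  proof -
    have "c * lam1 * pO powr (lam1 - 1) = (lam2 - lam1) * (lam1 * A * pO powr (lam1 - 1))"
      unfolding c_def by (simp add: algebra_simps)
    also have "\<dots> = - a * (lam2 - lam1)" unfolding key by simp
    finally show ?thesis unfolding d_def using apos l1
      by (simp add: algebra_simps)
  qed
  obtain p1 p2 where pp: "0 < p1" "p1 < p2" "{p. 0 < p \<and> c * p powr lam1 + d * p - b = 0} = {p1, p2}"
    "p1 \<le> pO" "p2 > pO"
    using two_roots[OF c d b l1 pO Gq Dq] by blast
  have "p2 powr (lam1 - 1) < pO powr (lam1 - 1)"
    using powr_less_mono2_neg[of "lam1 - 1" pO p2] l1 pO pp by simp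
  moreover have "lam1 * A < 0" using l1 Apos by (simp add: mult_neg_pos)
  ultimately have "lam1 * A * p2 powr (lam1 - 1) > lam1 * A * pO powr (lam1 - 1)"
    by (simp add: mult_less_cancel_left_neg)
  then have fin: "lam1 * A * p2 powr (lam1 - 1) + exp ((\<mu> - r) * \<delta>) / (r - \<mu>) > 0"
    using key unfolding a_def E1_def by simp
  show ?thesis
    apply (rule exI[of _ p1], rule exI[of _ p2])
    using pp fin unfolding Feq by blast
qed

end
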